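(* Let $1 \le R < P$ be integers and let $\mathcal{S}_{P,R}^+$ be the set of $P\times P$ real symmetric positive semi-definite matrices of rank exactly $R$, equipped with the topology induced from $\mathbb{R}^{P\times P}$. There is no distance (metric) $d : \mathcal{S}_{P,R}^+\times\mathcal{S}_{P,R}^+\to[0,\infty)$ that is continuous and satisfies the affine invariance property $$d(\bm{W}^{\top}\bm{S}\bm{W},\ \bm{W}^{\top}\bm{S}'\bm{W}) = d(\bm{S},\bm{S}')\quad\text{for all } \bm{S},\bm{S}'\in\mathcal{S}_{P,R}^+ \text{ and all invertible } \bm{W}\in\mathbb{R}^{P\times P}.$$
   Context: Note that for invertible $\bm{W}$ and $\bm{S}\in\mathcal{S}_{P,R}^+$, one has $\bm{W}^{\top}\bm{S}\bm{W}\in\mathcal{S}_{P,R}^+$, so the invariance condition is well posed. *)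

theory Defs
  imports "HOL-Analysis.Analysis"
begin

definition psd_matrix :: "real^'n^'n \<Rightarrow> bool" where
  "psd_matrix A \<longleftrightarrow> transpose A = A \<and> (\<forall>x. 0 \<le> x \<bullet> (A *v x))"

text \<open>The set S^+_{P,R}: PSD matrices of rank exactly R (P = CARD('n)).\<close>
definition psd_rank :: "nat \<Rightarrow> (real^'n^'n) set" where
  "psd_rank R = {A. psd_matrix A \<and> rank A = R}"

definition is_metric_on :: "'a set \<Rightarrow> ('a \<Rightarrow> 'a \<Rightarrow> real) \<Rightarrow> bool" where
  "is_metric_on S d \<longleftrightarrow>
     (\<forall>x\<in>S. \<forall>y\<in>S. 0 \<le> d x y) \<and>
     (\<forall>x\<in>S. \<forall>y\<in>S. d x y = 0 \<longleftrightarrow> x = y) \<and>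
     (\<forall>x\<in>S. \<forall>y\<in>S. d x y = d y x) \<and>
     (\<forall>x\<in>S. \<forall>y\<in>S. \<forall>z\<in>S. d x z \<le> d x y + d y z)"

end

theory Submission
  imports Defs
begin

lemma congr_psd_rank:
  fixes A W :: "real^'n^'n"
  assumes A: "A \<in> psd_rank R" and W: "invertible W"
  shows "transpose W ** A ** W \<in> psd_rank R"
proof -
  from A have At: "transpose A = A" and Ap: "\<forall>x. 0 \<le> x \<bullet> (A *v x)" and Ar: "rank A = R"
    by (auto simp: psd_rank_def psd_matrix_def)
  have "transpose (transpose W ** A ** W) = transpose W ** A ** W"
    by (simp add: matrix_transpose_mul At matrix_mul_assoc)
  moreover have "0 \<le> x \<bullet> ((transpose W ** A ** W) *v x)" for x
  proof -
    have "x \<bullet> ((transpose W ** A ** W) *v x) = x \<bullet> (transpose W *v (A *v (W *v x)))"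
      by (simp add: matrix_vector_mul_assoc matrix_mul_assoc)
    also have "\<dots> = (W *v x) \<bullet> (A *v (W *v x))"
      by (metis dot_lmul_matrix inner_commute vector_transpose_matrix)
    finally show ?thesis using Ap by simp
  qed
  moreover have "rank (transpose W ** A ** W) = R"
  proof -
    obtain V where V1: "W ** V = mat 1" and V2: "V ** W = mat 1" using W invertible_def by blast
    have le1: "rank (transpose W ** A ** W) \<le> rank A"
      by (metis rank_mul_le_left rank_mul_le_right order_trans)
    have "A = transpose V ** (transpose W ** A ** W) ** V"
    proof -
      have "transpose V ** transpose W = mat 1"
        by (metis V1 matrix_transpose_mul transpose_mat)
      hence "transpose V ** (transpose W ** A ** W) ** V = A ** (W ** V)"
        by (metis matrix_mul_assoc matrix_mul_lid)
      thus ?thesis using V1 by simp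
    qed
    hence "rank A \<le> rank (transpose W ** A ** W)"
      by (metis rank_mul_le_left rank_mul_le_right order_trans)
    with le1 Ar show ?thesis by simp
  qed
  ultimately show ?thesis by (simp add: psd_rank_def psd_matrix_def)
qed

lemma diag_congr:
  fixes A :: "real^'n^'n"
  shows "transpose (\<chi> a b. if a = b then f a else 0) ** A ** (\<chi> a b. if a = b then f a else 0)
         = (\<chi> a b. f a * A$a$b * f b)"
proof -
  have "(\<Sum>k\<in>UNIV. (if k = i then f k else 0) * B k) = f i * B i" for i and B :: "'n \<Rightarrow> real"
    by (simp add: if_distrib[of "\<lambda>t. t * _"] sum.delta cong: if_cong)
  moreover have "(\<Sum>k\<in>UNIV. B k * (if k = j then f k else 0)) = B j * f j" for j and B :: "'n \<Rightarrow> real"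
    by (simp add: if_distrib[of "\<lambda>t. _ * t"] sum.delta' cong: if_cong)
  ultimately show ?thesis
    by (simp add: matrix_matrix_mult_def transpose_def vec_eq_iff)
qed

lemma sum_delta_l: "(\<Sum>k\<in>UNIV. (if k = i then g k else 0) * B k) = g i * (B i::real)" for i :: "'n::finite"
  by (simp add: if_distrib[of "\<lambda>t. t * _"] cong: if_cong)

lemma sum_delta_r: "(\<Sum>k\<in>UNIV. B k * (if k = i then g k else 0)) = (B i::real) * g i" for i :: "'n::finite"
  by (simp add: if_distrib[of "\<lambda>t. _ * t"] cong: if_cong)

lemma mult_diag_right: "(A ** (\<chi> a b. if a = b then g a else 0)) $ i $ j = (A $ i $ j :: real) * g j"
  by (simp add: matrix_matrix_mult_def sum_delta_r)

lemma diag_mult: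
  "(\<chi> a b. if a = b then f a else 0) ** (\<chi> a b. if a = b then g a else 0)
   = ((\<chi> a b. if a = b then f a * g a else 0) :: real^'n^'n)"
  by (simp add: vec_eq_iff mult_diag_right)

definition Vc :: "'n::finite \<Rightarrow> 'n \<Rightarrow> real \<Rightarrow> real^'n^'n" where
 "Vc i q c = (\<chi> a b. if a = b then 1 else if a = i \<and> b = q then c else 0)"
lemma Vc_entry: "i \<noteq> q \<Longrightarrow> Vc i q c $ a $ k = (if k = a then 1 else 0) + (if a = i then (if k = q then c else 0) else 0)"
  by (auto simp: Vc_def)
lemma Vc_mult: assumes "i \<noteq> q" shows "Vc i q c ** Vc i q c' = Vc i q (c + c')"
proof -
  have "(\<Sum>k\<in>UNIV. Vc i q c $ a $ k * Vc i q c' $ k $ b) = Vc i q (c + c') $ a $ b" for a b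
  proof -
    have "(\<Sum>k\<in>UNIV. Vc i q c $ a $ k * Vc i q c' $ k $ b) =
      (\<Sum>k\<in>UNIV. (if k = a then Vc i q c' $ k $ b else 0)) + (\<Sum>k\<in>UNIV. (if a = i then (if k = q then c * Vc i q c' $ k $ b else 0) else 0))"
      unfolding sum.distrib[symmetric] Vc_entry[OF assms, of c a]
      by (intro sum.cong) (auto simp: distrib_right)
    also have "\<dots> = Vc i q c' $ a $ b + (if a = i then c * Vc i q c' $ q $ b else 0)"
      by simp
    finally show ?thesis using assms by (auto simp: Vc_def)
  qed
  thus ?thesis by (simp add: matrix_matrix_mult_def vec_eq_iff)
qed
lemma Vc_inv: "i \<noteq> q \<Longrightarrow> invertible (Vc i q c)"
  unfolding invertible_def
  by (rule exI[of _ "Vc i q (-c)"]) (simp add: Vc_mult, simp add: Vc_def mat_def vec_eq_iff)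
lemma congr_diag_entry:
  fixes V :: "real^'n^'n"
  shows "(transpose V ** (\<chi> a b. if a = b \<and> a \<in> I then 1 else 0) ** V) $ a $ b
     = (\<Sum>k\<in>UNIV. if k \<in> I then V $ k $ a * V $ k $ b else 0)"
proof -
  have SV: "((\<chi> a b. if a = b \<and> a \<in> I then 1 else 0) ** V) $ k $ b = (if k \<in> I then V $ k $ b else 0)" for k
    by (simp add: matrix_matrix_mult_def if_distrib[of "\<lambda>t. t * _"] cong: if_cong)
  have "(transpose V ** (\<chi> a b. if a = b \<and> a \<in> I then 1 else 0) ** V) $ a $ b
      = (transpose V ** ((\<chi> a b. if a = b \<and> a \<in> I then 1 else 0) ** V)) $ a $ b"
    by (simp add: matrix_mul_assoc)
  also have "\<dots> = (\<Sum>k\<in>UNIV. transpose V $ a $ k * ((\<chi> a b. if a = b \<and> a \<in> I then 1 else 0) ** V) $ k $ b)"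
    by (simp add: matrix_matrix_mult_def)
  also have "\<dots> = (\<Sum>k\<in>UNIV. if k \<in> I then V $ k $ a * V $ k $ b else 0)"
    by (intro sum.cong) (auto simp: SV transpose_def)
  finally show ?thesis .
qed

theorem mainTheorem4:
  fixes R :: nat and d :: "real^'n^'n \<Rightarrow> real^'n^'n \<Rightarrow> real"
  assumes "1 \<le> R" and "R < CARD('n)"
  shows "\<not> (is_metric_on (psd_rank R) d \<and>
             continuous_on (psd_rank R \<times> psd_rank R) (\<lambda>(S, S'). d S S') \<and>
             (\<forall>S\<in>psd_rank R. \<forall>S'\<in>psd_rank R. \<forall>W::real^'n^'n. invertible W \<longrightarrow>
                d (transpose W ** S ** W) (transpose W ** S' ** W) = d S S'))"
proof
  assume H: "is_metric_on (psd_rank R) d \<and>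
             continuous_on (psd_rank R \<times> psd_rank R) (\<lambda>(S, S'). d S S') \<and>
             (\<forall>S\<in>psd_rank R. \<forall>S'\<in>psd_rank R. \<forall>W::real^'n^'n. invertible W \<longrightarrow>
                d (transpose W ** S ** W) (transpose W ** S' ** W) = d S S')"
  hence met: "is_metric_on (psd_rank R) d"
    and cont: "continuous_on (psd_rank R \<times> psd_rank R) (\<lambda>(S, S'). d S S')"
    and inv: "\<And>S S' W. S \<in> psd_rank R \<Longrightarrow> S' \<in> psd_rank R \<Longrightarrow> invertible W \<Longrightarrow>
                d (transpose W ** S ** W) (transpose W ** S' ** W) = d S S'"
    by auto
  define q :: 'n where "q = undefined"
  have "R \<le> card (UNIV - {q})" using assms by (simp add: card_Diff_singleton)
  then obtain I where I: "I \<subseteq> UNIV - {q}" "card I = R" "finite I"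
    by (rule obtain_subset_with_card_n)
  with assms obtain i where iI: "i \<in> I" by fastforce
  have qI: "q \<notin> I" using I by auto
  have iq: "i \<noteq> q" using iI qI by auto
  define S :: "real^'n^'n" where "S = (\<chi> a b. if a = b \<and> a \<in> I then 1 else 0)"
  have Sv: "S *v x = (\<chi> a. if a \<in> I then x $ a else 0)" for x
    by (simp add: S_def matrix_vector_mult_def vec_eq_iff if_distrib[of "\<lambda>t. t * _"] cong: if_cong)
  have SR: "S \<in> psd_rank R"
  proof -
    have "transpose S = S" by (auto simp: S_def transpose_def vec_eq_iff)
    moreover have "0 \<le> x \<bullet> (S *v x)" for x
      unfolding Sv inner_vec_def by (intro sum_nonneg) auto
    moreover have "range (\<lambda>x. S *v x) = {x::real^'n. \<forall>i. i \<notin> I \<longrightarrow> x $ i = 0}"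
    proof (intro set_eqI iffI)
      fix y assume "y \<in> {x::real^'n. \<forall>i. i \<notin> I \<longrightarrow> x $ i = 0}"
      hence "S *v y = y" unfolding Sv by (auto simp: vec_eq_iff)
      thus "y \<in> range (\<lambda>x. S *v x)" by (metis rangeI)
    qed (auto simp: Sv)
    hence "rank S = R"
      by (simp add: rank_dim_range dim_vec_eq[symmetric] dim_substandard_cart I)
    ultimately show ?thesis by (simp add: psd_rank_def psd_matrix_def)
  qed
  define V :: "real^'n^'n" where "V = Vc i q 1"
  have Vinv: "invertible V" unfolding V_def using iq by (rule Vc_inv)
  define S1 where "S1 = transpose V ** S ** V"
  have S1R: "S1 \<in> psd_rank R" unfolding S1_def using SR Vinv by (rule congr_psd_rank)
  have S1qq: "S1 $ q $ q = 1"
  proof -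
    have "S1 $ q $ q = (\<Sum>k\<in>UNIV. if k = i then 1 else 0)"
      unfolding S1_def S_def congr_diag_entry
      by (intro sum.cong) (use iI qI iq in \<open>auto simp: V_def Vc_def\<close>)
    thus ?thesis by simp
  qed
  have S1ab: "S1 $ a $ b = S $ a $ b" if "a \<noteq> q" "b \<noteq> q" for a b
  proof -
    have "S1 $ a $ b = (\<Sum>k\<in>UNIV. if k = a then (if a = b \<and> a \<in> I then 1 else 0) else 0)"
      unfolding S1_def S_def congr_diag_entry
      by (intro sum.cong) (use that in \<open>auto simp: V_def Vc_def\<close>)
    thus ?thesis by (simp add: S_def)
  qed
  define ff :: "real \<Rightarrow> 'n \<Rightarrow> real" where "ff t a = (if a = q then t else 1)" for t a
  define D :: "real \<Rightarrow> real^'n^'n" where "D t = (\<chi> a b. if a = b then ff t a else 0)" for t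
  have Dinv: "invertible (D t)" if "t \<noteq> 0" for t
  proof -
    have "D t ** D (1/t) = mat 1" "D (1/t) ** D t = mat 1"
      using that by (simp_all add: D_def diag_mult ff_def mat_def vec_eq_iff)
    thus ?thesis unfolding invertible_def by blast
  qed
  have DS: "transpose (D t) ** S ** D t = S" for t
    unfolding D_def diag_congr using qI by (simp add: S_def vec_eq_iff ff_def)
  define St where "St t = transpose (D t) ** S1 ** D t" for t
  have St_eq: "St t = (\<chi> a b. ff t a * S1 $ a $ b * ff t b)" for t
    unfolding St_def D_def diag_congr ..
  have St0: "(\<chi> a b. ff 0 a * S1 $ a $ b * ff 0 b) = S"
    using qI S1ab by (auto simp: vec_eq_iff ff_def S_def)
  have ffl: "((\<lambda>t. ff t a) \<longlongrightarrow> ff 0 a) (at 0)" for a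
    by (cases "a = q") (simp_all add: ff_def tendsto_ident_at)
  have "(St \<longlongrightarrow> S) (at 0)"
    unfolding St_eq St0[symmetric]
    by (intro tendsto_vec_lambda tendsto_mult ffl tendsto_const)
  hence lim1: "((\<lambda>t. (S, St t)) \<longlongrightarrow> (S, S)) (at 0)"
    by (intro tendsto_Pair tendsto_const)
  have ev: "\<forall>\<^sub>F t in at (0::real). (S, St t) \<in> psd_rank R \<times> psd_rank R"
    unfolding eventually_at_filter
    by (auto intro!: always_eventually simp: St_def SR intro: congr_psd_rank[OF S1R Dinv])
  have "((\<lambda>t. (\<lambda>(S, S'). d S S') (S, St t)) \<longlongrightarrow> (\<lambda>(S, S'). d S S') (S, S)) (at 0)"
    by (rule continuous_on_tendsto_compose[OF cont lim1 _ ev]) (simp add: SR)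
  hence lim2: "((\<lambda>t. d S (St t)) \<longlongrightarrow> d S S) (at 0)" by simp
  have ev2: "\<forall>\<^sub>F t in at (0::real). d S S1 = d S (St t)"
  proof -
    have "d S (St t) = d S S1" if "t \<noteq> 0" for t
      using inv[OF SR S1R Dinv[OF that]] DS[of t] by (simp add: St_def)
    thus ?thesis unfolding eventually_at_filter by (auto intro!: always_eventually)
  qed
  have "((\<lambda>t. d S S1) \<longlongrightarrow> d S S) (at (0::real))"
    using Lim_transform_eventually[OF lim2] ev2 by (simp add: eventually_mono)
  hence "d S S1 = d S S" using tendsto_const tendsto_unique trivial_limit_at by (metis at_neq_bot)
  moreover have "d S S = 0" using met SR unfolding is_metric_on_def by blast
  ultimately have "d S S1 = 0" by simp
  hence "S = S1" using met SR S1R unfolding is_metric_on_def by blast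
  moreover have "S $ q $ q = 0" using qI by (simp add: S_def)
  ultimately show False using S1qq by simp
qed

end
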